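(* Let $(M,\Sigma)$ be a measurable space, $r\ge1$, and $\mu_1,\dots,\mu_r$ non-atomic countably additive finite measures on $\Sigma$. Let $S\in\Sigma$ satisfy $\prod_{i=1}^r\mu_i(S)\neq0$. Then there exist pairwise disjoint measurable sets $R^1,\dots,R^r\subseteq S$ and a permutation $(l_1,\dots,l_r)$ of $\{1,\dots,r\}$ such that for each $k$ we have $\mu_{l_k}(R^k)=\frac1r\mu_{l_k}(S)$, and for all $j>k$ we have $\mu_{l_j}(R^k)\le\frac1r\mu_{l_j}(S)$. *)

theory Defs
  imports "HOL-Analysis.Analysis"
begin

definition is_atom :: "'a measure \<Rightarrow> 'a set \<Rightarrow> bool" where
  "is_atom M A \<longleftrightarrow> A \<in> sets M \<and> emeasure M A > 0 \<and>
     (\<forall>B\<in>sets M. B \<subseteq> A \<longrightarrow> emeasure M B = 0 \<or> emeasure M (A - B) = 0)"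

definition non_atomic :: "'a measure \<Rightarrow> bool" where
  "non_atomic M \<longleftrightarrow> (\<nexists>A. is_atom M A)"

end

theory Submission
  imports Defs
begin


lemma (in finite_measure) halve:
  assumes na: "non_atomic M" and A: "A \<in> sets M" and pos: "measure M A > 0"
  shows "\<exists>B\<in>sets M. B \<subseteq> A \<and> 0 < measure M B \<and> measure M B \<le> measure M A / 2"
proof -
  have "\<not> is_atom M A" using na unfolding non_atomic_def by blast
  moreover have "emeasure M A > 0" using pos emeasure_eq_measure[of A] by simp
  ultimately obtain B where B: "B \<in> sets M" "B \<subseteq> A" "emeasure M B \<noteq> 0" "emeasure M (A - B) \<noteq> 0"
    using A unfolding is_atom_def by auto
  have mB: "measure M B > 0" using B(3) emeasure_eq_measure[of B] measure_nonneg[of M B]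
    by (metis ennreal_0 less_eq_real_def)
  have mAB0: "measure M (A - B) > 0" using B(4) emeasure_eq_measure[of "A - B"] measure_nonneg[of M "A - B"]
    by (metis ennreal_0 less_eq_real_def)
  have mAB: "measure M (A - B) = measure M A - measure M B"
    using finite_measure_Diff[OF A B(1,2)] .
  show ?thesis
  proof (cases "measure M B \<le> measure M A / 2")
    case True then show ?thesis using B mB by blast
  next
    case False
    then show ?thesis using mAB mAB0 A B(1)
      by (intro bexI[of _ "A - B"]) auto
  qed
qed

lemma (in finite_measure) small:
  assumes na: "non_atomic M" and A: "A \<in> sets M" and pos: "measure M A > 0" and e: "e > 0"
  shows "\<exists>B\<in>sets M. B \<subseteq> A \<and> 0 < measure M B \<and> measure M B < e"
proof -
  have *: "\<exists>B\<in>sets M. B \<subseteq> A \<and> 0 < measure M B \<and> measure M B \<le> measure M A / 2^n" for n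
  proof (induction n)
    case 0 show ?case using A pos by (intro bexI[of _ A]) auto
  next
    case (Suc n)
    then obtain B where B: "B\<in>sets M" "B \<subseteq> A" "0 < measure M B" "measure M B \<le> measure M A / 2^n" by blast
    from halve[OF na B(1,3)] obtain C where C: "C\<in>sets M" "C \<subseteq> B" "0 < measure M C" "measure M C \<le> measure M B / 2"
      by blast
    have h2: "measure M B / 2 \<le> (measure M A / 2^n) / 2" using B(4) by (rule divide_right_mono) simp_all
    have "measure M C \<le> (measure M A / 2^n) / 2" using C(4) h2 by (rule order_trans)
    then have "measure M C \<le> measure M A / 2 ^ Suc n" by simp
    then show ?case using C B by (intro bexI[of _ C]) auto
  qed
  obtain n where n: "(1/2::real) ^ n < e / measure M A" using real_arch_pow_inv[of "e / measure M A" "1/2"] e pos by auto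
  then have lt: "measure M A / 2^n < e" using pos by (simp add: less_divide_eq power_one_over mult.commute)
  obtain B where "B\<in>sets M" "B \<subseteq> A" "0 < measure M B" "measure M B \<le> measure M A / 2^n" using *[of n] by blast
  then show ?thesis using lt by (intro bexI[of _ B]) auto
qed

lemma (in finite_measure) sierpinski:
  assumes na: "non_atomic M" and A: "A \<in> sets M" and c: "0 \<le> c" "c \<le> measure M A"
  shows "\<exists>B\<in>sets M. B \<subseteq> A \<and> measure M B = c"
proof -
  define cand where "cand B = {C\<in>sets M. C \<subseteq> A - B \<and> measure M B + measure M C \<le> c}" for B
  have ex: "\<exists>C. C \<in> cand B \<and> (\<forall>D\<in>cand B. measure M D \<le> 2 * measure M C)" if "measure M B \<le> c" for B
  proof -
    define s where "s = Sup (measure M ` cand B)"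
    have ne: "{} \<in> cand B" using that by (simp add: cand_def)
    have bdd: "bdd_above (measure M ` cand B)" using bounded_measure
      by (auto intro!: bdd_aboveI[where M="measure M (space M)"])
    have le: "measure M D \<le> s" if "D \<in> cand B" for D
      using cSup_upper[OF imageI[OF that] bdd] s_def by simp
    show ?thesis
    proof (cases "s \<le> 0")
      case True then show ?thesis using ne le by (intro exI[of _ "{}"]) force
    next
      case False
      then have h: "s/2 < Sup (measure M ` cand B)" by (simp add: s_def)
      have ne2: "measure M ` cand B \<noteq> {}" using ne by blast
      have "\<exists>x\<in>measure M ` cand B. s/2 < x" using iffD1[OF less_cSup_iff[OF ne2 bdd] h] .
      then obtain D where "D \<in> cand B" "s/2 < measure M D" by blast
      then show ?thesis using le by (intro exI[of _ D]) force
    qed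
  qed
  then obtain f where f: "\<forall>B. measure M B \<le> c \<longrightarrow> f B \<in> cand B \<and> (\<forall>D\<in>cand B. measure M D \<le> 2 * measure M (f B))"
    by metis
  define Bs where "Bs n = ((\<lambda>B. B \<union> f B) ^^ n) {}" for n
  have Bs_Suc: "Bs (Suc n) = Bs n \<union> f (Bs n)" for n by (simp add: Bs_def)
  have inv: "Bs n \<in> sets M \<and> Bs n \<subseteq> A \<and> measure M (Bs n) \<le> c" for n
  proof (induction n)
    case 0 show ?case using c by (simp add: Bs_def)
  next
    case (Suc n)
    then have fc: "f (Bs n) \<in> cand (Bs n)" using f by blast
    then have fs: "f (Bs n) \<in> sets M" "f (Bs n) \<subseteq> A - Bs n" "measure M (Bs n) + measure M (f (Bs n)) \<le> c"
      by (auto simp: cand_def)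
    have "measure M (Bs (Suc n)) = measure M (Bs n) + measure M (f (Bs n))"
      unfolding Bs_Suc using Suc fs by (intro finite_measure_Union) auto
    then show ?case unfolding Bs_Suc using Suc fs by auto
  qed
  have fc: "f (Bs n) \<in> cand (Bs n)" and fmax: "\<forall>D\<in>cand (Bs n). measure M D \<le> 2 * measure M (f (Bs n))" for n
    using f inv by blast+
  have meq: "measure M (Bs (Suc n)) = measure M (Bs n) + measure M (f (Bs n))" for n
    unfolding Bs_Suc using inv[of n] fc[of n] by (intro finite_measure_Union) (auto simp: cand_def)
  define U where "U = (\<Union>n. Bs n)"
  have inc: "incseq Bs" by (rule incseq_SucI) (simp add: Bs_Suc)
  have lim: "(\<lambda>n. measure M (Bs n)) \<longlonglongrightarrow> measure M U"
    unfolding U_def using inv inc by (intro finite_Lim_measure_incseq) auto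
  have U: "U \<in> sets M" "U \<subseteq> A" using inv by (auto simp: U_def)
  have Ule: "measure M U \<le> c" using inv by (intro LIMSEQ_le_const2[OF lim]) auto
  have fto0: "(\<lambda>n. measure M (f (Bs n))) \<longlonglongrightarrow> 0"
  proof -
    have "(\<lambda>n. measure M (Bs (Suc n)) - measure M (Bs n)) \<longlonglongrightarrow> measure M U - measure M U"
      using tendsto_diff[OF LIMSEQ_Suc[OF lim] lim] .
    then show ?thesis using meq by simp
  qed
  show ?thesis
  proof (cases "measure M U < c")
    case False then show ?thesis using Ule U by (intro bexI[of _ U]) auto
  next
    case True
    have "measure M (A - U) = measure M A - measure M U" using finite_measure_Diff A U by blast
    then have pos: "measure M (A - U) > 0" using True c by simp
    obtain D where D: "D \<in> sets M" "D \<subseteq> A - U" "0 < measure M D" "measure M D < c - measure M U"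
      using small[OF na _ pos, of "c - measure M U"] A U True by auto
    have Dc: "D \<in> cand (Bs n)" for n
    proof -
      have sub: "Bs n \<subseteq> U" by (auto simp: U_def)
      have "measure M (Bs n) \<le> measure M U" using finite_measure_mono[OF sub U(1)] .
      then show ?thesis using D sub by (auto simp: cand_def)
    qed
    have "measure M D / 2 \<le> measure M (f (Bs n))" for n
    proof -
      have "measure M D \<le> 2 * measure M (f (Bs n))" using bspec[OF fmax[of n] Dc[of n]] .
      then show ?thesis by simp
    qed
    then have "measure M D / 2 \<le> 0" by (intro LIMSEQ_le_const[OF fto0]) auto
    with D show ?thesis by simp
  qed
qed



lemma diminish:
  assumes "finite I" "I \<noteq> {}"
  shows "(\<And>i. i \<in> I \<Longrightarrow> sets (\<mu> i) = sets N) \<Longrightarrow>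
    (\<And>i. i \<in> I \<Longrightarrow> finite_measure (\<mu> i)) \<Longrightarrow>
    (\<And>i. i \<in> I \<Longrightarrow> non_atomic (\<mu> i)) \<Longrightarrow>
    T \<in> sets N \<Longrightarrow>
    (\<And>i. i \<in> I \<Longrightarrow> 0 \<le> c i \<and> c i \<le> measure (\<mu> i) T) \<Longrightarrow>
    \<exists>a\<in>I. \<exists>R\<in>sets N. R \<subseteq> T \<and> measure (\<mu> a) R = c a \<and> (\<forall>i\<in>I. measure (\<mu> i) R \<le> c i)"
  using assms
proof (induction I rule: finite_ne_induct)
  case (singleton x)
  have "T \<in> sets (\<mu> x)" using singleton by auto
  then obtain R where "R \<in> sets (\<mu> x)" "R \<subseteq> T" "measure (\<mu> x) R = c x"
    using finite_measure.sierpinski[OF singleton.prems(2)[of x] singleton.prems(3)[of x], of T "c x"]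
      singleton.prems(5)[of x] by auto
  then show ?case using singleton.prems(1)[of x] by auto
next
  case (insert x F)
  have "\<exists>a\<in>F. \<exists>R\<in>sets N. R \<subseteq> T \<and> measure (\<mu> a) R = c a \<and> (\<forall>i\<in>F. measure (\<mu> i) R \<le> c i)"
    using insert.prems by (intro insert.IH) auto
  then obtain a R where aR: "a \<in> F" "R \<in> sets N" "R \<subseteq> T" "measure (\<mu> a) R = c a"
    "\<forall>i\<in>F. measure (\<mu> i) R \<le> c i" by blast
  show ?case
  proof (cases "measure (\<mu> x) R \<le> c x")
    case True then show ?thesis using aR by (intro bexI[of _ a]) auto
  next
    case False
    have fx: "finite_measure (\<mu> x)" and sx: "sets (\<mu> x) = sets N" and nx: "non_atomic (\<mu> x)"
      using insert.prems by auto
    have "R \<in> sets (\<mu> x)" using aR sx by simp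
    then obtain R' where R': "R' \<in> sets (\<mu> x)" "R' \<subseteq> R" "measure (\<mu> x) R' = c x"
      using finite_measure.sierpinski[OF fx nx, of R "c x"] insert.prems(5)[of x] False by auto
    have "measure (\<mu> i) R' \<le> c i" if "i \<in> F" for i
    proof -
      have "finite_measure (\<mu> i)" "sets (\<mu> i) = sets N" using insert.prems that by auto
      then have "measure (\<mu> i) R' \<le> measure (\<mu> i) R"
        using finite_measure.finite_measure_mono[of "\<mu> i" R' R] R' aR by auto
      then show ?thesis using aR that by force
    qed
    then show ?thesis using R' sx aR by (intro bexI[of _ x] bexI[of _ R']) auto
  qed
qed



theorem lemma9:
  fixes N :: "'a measure" and \<mu> :: "nat \<Rightarrow> 'a measure" and r :: nat and S :: "'a set"
  assumes r: "r \<ge> 1"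
    and sets_eq: "\<And>i. i \<in> {1..r} \<Longrightarrow> sets (\<mu> i) = sets N"
    and fin: "\<And>i. i \<in> {1..r} \<Longrightarrow> finite_measure (\<mu> i)"
    and na: "\<And>i. i \<in> {1..r} \<Longrightarrow> non_atomic (\<mu> i)"
    and S: "S \<in> sets N"
    and prod: "(\<Prod>i\<in>{1..r}. measure (\<mu> i) S) \<noteq> 0"
  shows "\<exists>R :: nat \<Rightarrow> 'a set. \<exists>l :: nat \<Rightarrow> nat.
           l permutes {1..r} \<and>
           (\<forall>k\<in>{1..r}. R k \<in> sets N \<and> R k \<subseteq> S) \<and>
           disjoint_family_on R {1..r} \<and>
           (\<forall>k\<in>{1..r}. measure (\<mu> (l k)) (R k) = measure (\<mu> (l k)) S / real r) \<and>
           (\<forall>k\<in>{1..r}. \<forall>j\<in>{1..r}. k < j \<longrightarrow>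
              measure (\<mu> (l j)) (R k) \<le> measure (\<mu> (l j)) S / real r)"
proof -
  define c where "c i = measure (\<mu> i) S / real r" for i
  have c0: "0 \<le> c i" for i by (simp add: c_def)
  have claim: "\<exists>R l. bij_betw l {r-n+1..r} I \<and> (\<forall>k\<in>{r-n+1..r}. R k \<in> sets N \<and> R k \<subseteq> T) \<and>
      disjoint_family_on R {r-n+1..r} \<and> (\<forall>k\<in>{r-n+1..r}. measure (\<mu> (l k)) (R k) = c (l k)) \<and>
      (\<forall>k\<in>{r-n+1..r}. \<forall>j\<in>{r-n+1..r}. k < j \<longrightarrow> measure (\<mu> (l j)) (R k) \<le> c (l j))"
    if "n \<le> r" "I \<subseteq> {1..r}" "card I = n" "T \<in> sets N" "T \<subseteq> S" "\<forall>i\<in>I. real n * c i \<le> measure (\<mu> i) T"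
    for n I T
    using that
  proof (induction n arbitrary: I T)
    case 0
    then have "I = {}" by (metis card_0_eq finite_atLeastAtMost finite_subset)
    moreover have "{r - 0 + 1..r} = {}" by simp
    ultimately show ?case by (auto simp: disjoint_family_on_def)
  next
    case (Suc n)
    have finI: "finite I" using Suc.prems(2) finite_subset by blast
    have Ine: "I \<noteq> {}" using Suc.prems(3) by auto
    obtain a R1 where aR: "a \<in> I" "R1 \<in> sets N" "R1 \<subseteq> T" "measure (\<mu> a) R1 = c a"
      "\<forall>i\<in>I. measure (\<mu> i) R1 \<le> c i"
    proof -
      have "\<exists>a\<in>I. \<exists>R\<in>sets N. R \<subseteq> T \<and> measure (\<mu> a) R = c a \<and> (\<forall>i\<in>I. measure (\<mu> i) R \<le> c i)"
      proof (rule diminish[OF finI Ine])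
        show "sets (\<mu> i) = sets N" "finite_measure (\<mu> i)" "non_atomic (\<mu> i)" if "i \<in> I" for i
          using that Suc.prems(2) sets_eq fin na by auto
        show "T \<in> sets N" by fact
        show "0 \<le> c i \<and> c i \<le> measure (\<mu> i) T" if "i \<in> I" for i
        proof -
          have "c i \<le> real (Suc n) * c i" using c0[of i] by (simp add: algebra_simps)
          then show ?thesis using Suc.prems(6) that c0[of i] by force
        qed
      qed
      then show ?thesis using that by blast
    qed
    define I' where "I' = I - {a}"
    define T' where "T' = T - R1"
    have T': "T' \<in> sets N" "T' \<subseteq> S" using Suc.prems aR by (auto simp: T'_def)
    have mT': "real n * c i \<le> measure (\<mu> i) T'" if "i \<in> I'" for i
    proof -
      have i: "i \<in> {1..r}" "i \<in> I" using that Suc.prems(2) by (auto simp: I'_def)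
      have "measure (\<mu> i) T' = measure (\<mu> i) T - measure (\<mu> i) R1"
        unfolding T'_def using finite_measure.finite_measure_Diff[OF fin[OF i(1)], of T R1]
          sets_eq[OF i(1)] Suc.prems(4) aR by auto
      moreover have "real (Suc n) * c i \<le> measure (\<mu> i) T" using Suc.prems(6) i by blast
      moreover have "measure (\<mu> i) R1 \<le> c i" using aR i by blast
      ultimately show ?thesis by (simp add: algebra_simps)
    qed
    obtain R' l' where IH: "bij_betw l' {r-n+1..r} I'" "\<forall>k\<in>{r-n+1..r}. R' k \<in> sets N \<and> R' k \<subseteq> T'"
      "disjoint_family_on R' {r-n+1..r}" "\<forall>k\<in>{r-n+1..r}. measure (\<mu> (l' k)) (R' k) = c (l' k)"
      "\<forall>k\<in>{r-n+1..r}. \<forall>j\<in>{r-n+1..r}. k < j \<longrightarrow> measure (\<mu> (l' j)) (R' k) \<le> c (l' j)"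
    proof -
      have "card I' = n" using Suc.prems(3) aR finI by (simp add: I'_def card_Diff_singleton)
      moreover have "I' \<subseteq> {1..r}" "n \<le> r" using Suc.prems by (auto simp: I'_def)
      ultimately have "\<exists>R l. bij_betw l {r-n+1..r} I' \<and> (\<forall>k\<in>{r-n+1..r}. R k \<in> sets N \<and> R k \<subseteq> T') \<and>
        disjoint_family_on R {r-n+1..r} \<and> (\<forall>k\<in>{r-n+1..r}. measure (\<mu> (l k)) (R k) = c (l k)) \<and>
        (\<forall>k\<in>{r-n+1..r}. \<forall>j\<in>{r-n+1..r}. k < j \<longrightarrow> measure (\<mu> (l j)) (R k) \<le> c (l j))"
        using T' mT' by (intro Suc.IH) auto
      then show ?thesis using that by blast
    qed
    define k0 where "k0 = r - n"
    have Keq: "{r - Suc n + 1..r} = insert k0 {r-n+1..r}" using Suc.prems(1) by (auto simp: k0_def)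
    have k0K: "k0 \<notin> {r-n+1..r}" using Suc.prems(1) by (auto simp: k0_def)
    define l where "l = l'(k0 := a)"
    define R where "R = R'(k0 := R1)"
    have l_K: "l k = l' k" "R k = R' k" if "k \<in> {r-n+1..r}" for k using that k0K by (auto simp: l_def R_def)
    have bij: "bij_betw l (insert k0 {r-n+1..r}) I"
    proof -
      have "bij_betw l {r-n+1..r} I'" using IH(1) by (rule bij_betw_cong[THEN iffD1, rotated]) (simp add: l_K)
      moreover have "I = insert (l k0) I'" using aR by (auto simp: l_def I'_def)
      moreover have "l k0 \<notin> I'" by (simp add: l_def I'_def)
      ultimately have "bij_betw l ({r-n+1..r} \<union> {k0}) (I' \<union> {l k0})"
        using notIn_Un_bij_betw3[OF k0K, of l I'] by blast
      then show ?thesis using \<open>I = insert (l k0) I'\<close> by simp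
    qed
    show ?case unfolding Keq
    proof (intro exI[of _ R] exI[of _ l] conjI ballI impI)
      show "bij_betw l (insert k0 {r-n+1..r}) I" by (rule bij)
    next
      fix k assume k: "k \<in> insert k0 {r-n+1..r}"
      then show "R k \<in> sets N" "R k \<subseteq> T"
        using IH(2) aR l_K by (auto simp: R_def T'_def)
      show "measure (\<mu> (l k)) (R k) = c (l k)"
        using k IH(4) aR l_K by (auto simp: R_def l_def)
    next
      show "disjoint_family_on R (insert k0 {r-n+1..r})"
        using IH(2,3) k0K unfolding disjoint_family_on_def R_def T'_def by (auto; blast)
    next
      fix k j assume k: "k \<in> insert k0 {r-n+1..r}" and j: "j \<in> insert k0 {r-n+1..r}" and kj: "k < j"
      then have jK: "j \<in> {r-n+1..r}" by (auto simp: k0_def)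
      have lj: "l' j \<in> I" using IH(1) jK by (auto simp: bij_betw_def I'_def)
      show "measure (\<mu> (l j)) (R k) \<le> c (l j)"
      proof (cases "k = k0")
        case True then show ?thesis using aR lj l_K[OF jK] by (auto simp: R_def)
      next
        case False then have "k \<in> {r-n+1..r}" using k by auto
        then show ?thesis using IH(5) jK kj l_K by auto
      qed
    qed
  qed
  have "\<exists>R l. bij_betw l {r-r+1..r} {1..r} \<and> (\<forall>k\<in>{r-r+1..r}. R k \<in> sets N \<and> R k \<subseteq> S) \<and>
      disjoint_family_on R {r-r+1..r} \<and> (\<forall>k\<in>{r-r+1..r}. measure (\<mu> (l k)) (R k) = c (l k)) \<and>
      (\<forall>k\<in>{r-r+1..r}. \<forall>j\<in>{r-r+1..r}. k < j \<longrightarrow> measure (\<mu> (l j)) (R k) \<le> c (l j))"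
    using r S by (intro claim) (auto simp: c_def)
  then obtain R l where Rl: "bij_betw l {1..r} {1..r}" "\<forall>k\<in>{1..r}. R k \<in> sets N \<and> R k \<subseteq> S"
      "disjoint_family_on R {1..r}" "\<forall>k\<in>{1..r}. measure (\<mu> (l k)) (R k) = c (l k)"
      "\<forall>k\<in>{1..r}. \<forall>j\<in>{1..r}. k < j \<longrightarrow> measure (\<mu> (l j)) (R k) \<le> c (l j)"
    by auto
  define l2 where "l2 k = (if k \<in> {1..r} then l k else k)" for k
  have l2: "l2 k = l k" if "k \<in> {1..r}" for k using that by (simp add: l2_def)
  have "l2 permutes {1..r}"
  proof (rule bij_imp_permutes)
    show "bij_betw l2 {1..r} {1..r}" using Rl(1) by (rule bij_betw_cong[THEN iffD1, rotated]) (simp add: l2)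
    show "l2 x = x" if "x \<notin> {1..r}" for x using that unfolding l2_def by auto
  qed
  then show ?thesis using Rl l2 unfolding c_def by (intro exI[of _ R] exI[of _ l2]) auto
qed

end
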